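(* Let $a\colon\mathcal{D}(X)\to X$ be a convex set (an algebra of the distribution monad) and let $b\colon X\to\mathcal{D}(X)$ be a $\overline{\mathcal{D}}$-coalgebra on it. Then $\{x\in X\mid b(x)=1x\}=\partial X$, the set of extreme points of $X$.
   Context: The distribution monad $\mathcal{D}$ on $\mathbf{Sets}$ has $\mathcal{D}(X)=\{\varphi\colon X\to[0,1]\mid\mathrm{supp}(\varphi)\text{ finite},\ \sum_x\varphi(x)=1\}$, written as formal convex sums $\sum_i r_ix_i$, with unit $\eta(x)=1x$ and multiplication $\mu(\sum_i r_i\varphi_i)(x)=\sum_i r_i\varphi_i(x)$. Its Eilenberg–Moore algebras $a\colon\mathcal{D}(X)\to X$ are convex sets (interpreting formal convex sums as actual ones), and homomorphisms are affine maps. The induced comonad $\overline{\mathcal{D}}$ on convex sets sends $X$ to the free convex set $\mathcal{D}(X)$ with counit $a$ and comultiplication $\mathcal{D}(\eta_X)$; a $\overline{\mathcal{D}}$-coalgebra is an affine map $b\colon X\to\mathcal{D}(X)$ with $a\circ b=\mathrm{id}$ and $\mathcal{D}(\eta_X)\circ b=\mathcal{D}(b)\circ b$. A point $x\in X$ is extreme if whenever $x=\sum_i r_ix_i$ (convex sum in $X$) there is $j$ with $r_j=1$ and $x_j=x$. *)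

theory Defs
  imports Main "HOL-Library.Indicator_Function"
begin

definition supp :: "('a \<Rightarrow> real) \<Rightarrow> 'a set" where
  "supp \<phi> = {x. \<phi> x \<noteq> 0}"

definition Dist :: "'a set \<Rightarrow> ('a \<Rightarrow> real) set" where
  "Dist X = {\<phi>. (\<forall>x. 0 \<le> \<phi> x) \<and> finite (supp \<phi>) \<and> supp \<phi> \<subseteq> X
                 \<and> sum \<phi> (supp \<phi>) = 1}"

text \<open>Unit: eta x = 1x.\<close>
definition eta :: "'a \<Rightarrow> ('a \<Rightarrow> real)" where
  "eta x = (\<lambda>y. if y = x then 1 else 0)"

definition Dmap :: "('a \<Rightarrow> 'b) \<Rightarrow> ('a \<Rightarrow> real) \<Rightarrow> ('b \<Rightarrow> real)" where
  "Dmap f \<phi> = (\<lambda>y. sum \<phi> {x \<in> supp \<phi>. f x = y})"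

definition mu :: "(('a \<Rightarrow> real) \<Rightarrow> real) \<Rightarrow> ('a \<Rightarrow> real)" where
  "mu \<Phi> = (\<lambda>x. \<Sum>\<phi>\<in>supp \<Phi>. \<Phi> \<phi> * \<phi> x)"

definition D_algebra :: "'a set \<Rightarrow> (('a \<Rightarrow> real) \<Rightarrow> 'a) \<Rightarrow> bool" where
  "D_algebra X a \<longleftrightarrow>
     (\<forall>\<phi>\<in>Dist X. a \<phi> \<in> X) \<and>
     (\<forall>x\<in>X. a (eta x) = x) \<and>
     (\<forall>\<Phi>\<in>Dist (Dist X). a (mu \<Phi>) = a (Dmap a \<Phi>))"

text \<open>Coalgebra of the induced comonad on convex sets: an affine map
  b : X \<rightarrow> D(X) (algebra homomorphism (X,a) \<rightarrow> (D X, mu)) with a \<circ> b = id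
  and D(eta) \<circ> b = D(b) \<circ> b.\<close>
definition D_coalgebra :: "'a set \<Rightarrow> (('a \<Rightarrow> real) \<Rightarrow> 'a) \<Rightarrow> ('a \<Rightarrow> ('a \<Rightarrow> real)) \<Rightarrow> bool" where
  "D_coalgebra X a b \<longleftrightarrow>
     (\<forall>x\<in>X. b x \<in> Dist X) \<and>
     (\<forall>\<phi>\<in>Dist X. b (a \<phi>) = mu (Dmap b \<phi>)) \<and>
     (\<forall>x\<in>X. a (b x) = x) \<and>
     (\<forall>x\<in>X. Dmap eta (b x) = Dmap b (b x))"

text \<open>Extreme point: whenever x = \<Sum>i r_i x_i (a formal convex sum \<phi>
  with a \<phi> = x) there is j with r_j = 1 and x_j = x.\<close>
definition extreme :: "'a set \<Rightarrow> (('a \<Rightarrow> real) \<Rightarrow> 'a) \<Rightarrow> 'a \<Rightarrow> bool" where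
  "extreme X a x \<longleftrightarrow> x \<in> X \<and>
     (\<forall>\<phi>\<in>Dist X. a \<phi> = x \<longrightarrow> (\<exists>j. \<phi> j = 1 \<and> j = x))"

end

theory Submission
  imports Defs
begin

lemma dist_point1:
  assumes "\<psi> \<in> Dist X" "\<psi> x = 1"
  shows "\<psi> = eta x"
proof -
  from assms have nn: "\<forall>y. 0 \<le> \<psi> y" and fin: "finite (supp \<psi>)" and s: "sum \<psi> (supp \<psi>) = 1"
    by (auto simp: Dist_def)
  have xs: "x \<in> supp \<psi>" using assms(2) by (simp add: supp_def)
  have "sum \<psi> (supp \<psi>) = \<psi> x + sum \<psi> (supp \<psi> - {x})"
    using fin xs by (simp add: sum.remove)
  hence z: "sum \<psi> (supp \<psi> - {x}) = 0" using s assms(2) by simp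
  have "\<forall>y\<in>supp \<psi> - {x}. \<psi> y = 0"
    using z fin nn by (subst (asm) sum_nonneg_eq_0_iff) auto
  thus ?thesis using assms(2) by (auto simp: eta_def supp_def fun_eq_iff)
qed

lemma dist_point0:
  assumes "\<psi> \<in> Dist X" "\<forall>y. y \<noteq> x \<longrightarrow> \<psi> y = 0"
  shows "\<psi> = eta x"
proof -
  from assms(1) have s: "sum \<psi> (supp \<psi>) = 1" by (simp add: Dist_def)
  have "supp \<psi> \<subseteq> {x}" using assms(2) by (auto simp: supp_def)
  hence "supp \<psi> = {} \<or> supp \<psi> = {x}" by (rule subset_singletonD)
  hence "\<psi> x = 1" using s by (elim disjE) simp_all
  thus ?thesis by (rule dist_point1[OF assms(1)])
qed

theorem mainTheorem5:
  fixes X :: "'a set" and a :: "('a \<Rightarrow> real) \<Rightarrow> 'a" and b :: "'a \<Rightarrow> ('a \<Rightarrow> real)"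
  assumes "D_algebra X a"
    and "D_coalgebra X a b"
  shows "{x \<in> X. b x = eta x} = {x. extreme X a x}"
proof -
  have C1: "\<And>x. x \<in> X \<Longrightarrow> b x \<in> Dist X"
   and C2: "\<And>\<phi>. \<phi> \<in> Dist X \<Longrightarrow> b (a \<phi>) = mu (Dmap b \<phi>)"
   and C3: "\<And>x. x \<in> X \<Longrightarrow> a (b x) = x"
    using assms(2) unfolding D_coalgebra_def by blast+
  have A2: "\<And>x. x \<in> X \<Longrightarrow> a (eta x) = x"
    using assms(1) unfolding D_algebra_def by blast
  show ?thesis
proof (intro set_eqI iffI)
  fix x assume "x \<in> {x. extreme X a x}"
  hence xX: "x \<in> X" and ex: "\<forall>\<phi>\<in>Dist X. a \<phi> = x \<longrightarrow> (\<exists>j. \<phi> j = 1 \<and> j = x)"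
    unfolding extreme_def by blast+
  have bd: "b x \<in> Dist X" "a (b x) = x" using C1 C3 xX by blast+
  then have "b x x = 1" using ex by blast
  hence "b x = eta x" by (rule dist_point1[OF bd(1)])
  thus "x \<in> {x \<in> X. b x = eta x}" using xX by simp
next
  fix x assume "x \<in> {x \<in> X. b x = eta x}"
  hence xX: "x \<in> X" and bx: "b x = eta x" by auto
  show "x \<in> {x. extreme X a x}"
    unfolding extreme_def
  proof (intro CollectI conjI ballI impI xX)
    fix \<phi> assume \<phi>: "\<phi> \<in> Dist X" and ax: "a \<phi> = x"
    have nn: "\<forall>y. 0 \<le> \<phi> y" and fin: "finite (supp \<phi>)" and sX: "supp \<phi> \<subseteq> X"
      and s: "sum \<phi> (supp \<phi>) = 1" using \<phi> by (auto simp: Dist_def)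
    have mu_eq: "mu (Dmap b \<phi>) = eta x" using C2[OF \<phi>] ax bx by simp
    define M where "M = Dmap b \<phi>"
    have Msub: "supp M \<subseteq> b ` supp \<phi>"
    proof
      fix \<psi> assume "\<psi> \<in> supp M"
      hence "sum \<phi> {z \<in> supp \<phi>. b z = \<psi>} \<noteq> 0" by (simp add: M_def Dmap_def supp_def)
      hence "{z \<in> supp \<phi>. b z = \<psi>} \<noteq> {}" by (metis sum.empty)
      thus "\<psi> \<in> b ` supp \<phi>" by auto
    qed
    hence Mfin: "finite (supp M)" using fin finite_subset by blast
    have Mnn: "\<And>\<psi>. 0 \<le> M \<psi>" unfolding M_def Dmap_def using nn by (simp add: sum_nonneg)
    have Mge: "\<And>z. z \<in> supp \<phi> \<Longrightarrow> \<phi> z \<le> M (b z)"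
    proof -
      fix z assume z: "z \<in> supp \<phi>"
      have "\<phi> z = sum \<phi> {z}" by simp
      also have "\<dots> \<le> sum \<phi> {w \<in> supp \<phi>. b w = b z}"
        using z fin nn by (intro sum_mono2) auto
      finally show "\<phi> z \<le> M (b z)" by (simp add: M_def Dmap_def)
    qed
    have bz: "b z = eta x" if z: "z \<in> supp \<phi>" for z
    proof -
      have zX: "z \<in> X" using z sX by blast
      have bzD: "b z \<in> Dist X" using C1 zX by blast
      have "\<phi> z \<noteq> 0" using z by (simp add: supp_def)
      hence pz: "\<phi> z > 0" using nn by (simp add: order_less_le)
      hence Mpos: "M (b z) > 0" using Mge[OF z] by linarith
      hence inM: "b z \<in> supp M" by (simp add: supp_def)
      show ?thesis
      proof (rule dist_point0[OF bzD], intro allI impI)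
        fix y assume yx: "y \<noteq> x"
        have "mu M y = 0" using mu_eq yx by (simp add: M_def eta_def)
        hence "(\<Sum>\<psi>\<in>supp M. M \<psi> * \<psi> y) = 0" by (simp add: mu_def)
        moreover have "\<forall>\<psi>\<in>supp M. 0 \<le> M \<psi> * \<psi> y"
        proof
          fix \<psi> assume "\<psi> \<in> supp M"
          then obtain w where "w \<in> supp \<phi>" "\<psi> = b w" using Msub by blast
          hence "\<psi> \<in> Dist X" using sX C1 by blast
          hence "0 \<le> \<psi> y" by (simp add: Dist_def)
          thus "0 \<le> M \<psi> * \<psi> y" using Mnn by simp
        qed
        ultimately have "M (b z) * b z y = 0" using Mfin inM by (simp add: sum_nonneg_eq_0_iff)
        thus "b z y = 0" using Mpos by simp
      qed
    qed
    have zx: "z = x" if z: "z \<in> supp \<phi>" for z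
    proof -
      have zX: "z \<in> X" using z sX by blast
      have "z = a (b z)" using C3 zX by simp
      also have "\<dots> = a (eta x)" using bz[OF z] by simp
      also have "\<dots> = x" using A2 xX by simp
      finally show ?thesis .
    qed
    hence "supp \<phi> \<subseteq> {x}" by blast
    hence "supp \<phi> = {} \<or> supp \<phi> = {x}" by (rule subset_singletonD)
    hence "\<phi> x = 1" using s by (elim disjE) simp_all
    thus "\<exists>j. \<phi> j = 1 \<and> j = x" by blast
  qed
qed
qed

end
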